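(* There exists an absolute constant $C>0$ such that every finite simple graph $G$ with $n$ vertices and at least one edge satisfies \[ \Gamma(G) \leq C\,\lambda_1(G)\left(\frac{n}{\lambda_1(G)}\right)^{1/3}, \] where $\lambda_1(G)$ is the largest eigenvalue of the adjacency matrix of $G$ and $\Gamma(G)$ is the Grundy number of $G$.
   Context: Given an ordering $(x_1,\dots,x_n)$ of $V(G)$, the first-fit coloring algorithm colors $x_i$ with the smallest positive integer not used on the neighbors of $x_i$ among $x_1,\dots,x_{i-1}$. The Grundy number $\Gamma(G)$ is the largest number of colors used by the first-fit algorithm over all vertex orderings. *)

theory Defs
  imports "Jordan_Normal_Form.Char_Poly"
begin

definition simple_graph :: "nat \<Rightarrow> (nat \<Rightarrow> nat \<Rightarrow> bool) \<Rightarrow> bool" where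
  "simple_graph n E \<longleftrightarrow> (\<forall>i j. E i j \<longrightarrow> i < n \<and> j < n) \<and> (\<forall>i j. E i j \<longrightarrow> E j i) \<and> (\<forall>i. \<not> E i i)"

text \<open>First-fit step: colour x with the least positive integer not used on already
  coloured neighbours (colour 0 means "not yet coloured").\<close>
definition ff_step :: "(nat \<Rightarrow> nat \<Rightarrow> bool) \<Rightarrow> (nat \<Rightarrow> nat) \<Rightarrow> nat \<Rightarrow> (nat \<Rightarrow> nat)" where
  "ff_step E cf x = cf(x := (LEAST c. 0 < c \<and> (\<forall>y. E x y \<and> cf y \<noteq> 0 \<longrightarrow> cf y \<noteq> c)))"

definition first_fit :: "(nat \<Rightarrow> nat \<Rightarrow> bool) \<Rightarrow> nat list \<Rightarrow> (nat \<Rightarrow> nat)" where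
  "first_fit E xs = foldl (ff_step E) (\<lambda>_. 0) xs"

definition ff_num_colors :: "(nat \<Rightarrow> nat \<Rightarrow> bool) \<Rightarrow> nat list \<Rightarrow> nat" where
  "ff_num_colors E xs = card (first_fit E xs ` set xs)"

definition grundy_number :: "nat \<Rightarrow> (nat \<Rightarrow> nat \<Rightarrow> bool) \<Rightarrow> nat" where
  "grundy_number n E = Max {ff_num_colors E xs | xs. distinct xs \<and> set xs = {0..<n}}"

definition adjacency_matrix :: "nat \<Rightarrow> (nat \<Rightarrow> nat \<Rightarrow> bool) \<Rightarrow> real mat" where
  "adjacency_matrix n E = mat n n (\<lambda>(i, j). if E i j then 1 else 0)"

definition lambda1 :: "nat \<Rightarrow> (nat \<Rightarrow> nat \<Rightarrow> bool) \<Rightarrow> real" where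
  "lambda1 n E = Max {k. eigenvalue (adjacency_matrix n E) k}"

end

theory Submission
  imports Defs "HOL-Analysis.Analysis"
begin
definition qf :: "(nat \<Rightarrow> nat \<Rightarrow> real) \<Rightarrow> nat \<Rightarrow> (nat \<Rightarrow> real) \<Rightarrow> real" where
  "qf a n f = (\<Sum>i\<in>{0..<n}. \<Sum>j\<in>{0..<n}. a i j * f i * f j)"
definition nf :: "nat \<Rightarrow> (nat \<Rightarrow> real) \<Rightarrow> real" where
  "nf n f = (\<Sum>i\<in>{0..<n}. (f i)\<^sup>2)"


lemma cont_coord[continuous_intros]: "continuous_on S (\<lambda>x::nat\<Rightarrow>real. x i)"
  by (rule continuous_on_subset[OF continuous_on_product_coordinates]) auto

lemma max_exists:
  assumes "n > 0"
  shows "\<exists>y. (\<forall>i\<ge>n. y i = 0) \<and> nf n y = 1 \<and>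
     (\<forall>f. (\<forall>i\<ge>n. f i = 0) \<and> nf n f = 1 \<longrightarrow> qf a n f \<le> qf a n y)"
proof -
  define B :: "(nat \<Rightarrow> real) set" where "B = Pi\<^sub>E UNIV (\<lambda>i. if i < n then {-1..1} else {0})"
  define S where "S = B \<inter> {f. nf n f = 1}"
  have "compactin (product_topology (\<lambda>_. euclidean) UNIV) B"
    unfolding B_def by (subst compactin_PiE) auto
  hence cB: "compact B" by (simp add: euclidean_product_topology compactin_euclidean_iff)
  have "closed {f. nf n f = 1}"
    unfolding nf_def by (intro closed_Collect_eq continuous_intros)
  hence cS: "compact S" unfolding S_def using cB by (intro compact_Int_closed)
  have Seq: "S = {f. (\<forall>i\<ge>n. f i = 0) \<and> nf n f = 1}"
  proof
    show "S \<subseteq> {f. (\<forall>i\<ge>n. f i = 0) \<and> nf n f = 1}"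
    proof (rule subsetI)
      fix f assume "f \<in> S"
      hence fB: "\<And>i. f i \<in> (if i<n then {-1..1} else {0})" and "nf n f = 1"
        unfolding S_def B_def by (auto simp: PiE_iff)
      have "f i = 0" if "i \<ge> n" for i using fB[of i] that by simp
      with \<open>nf n f = 1\<close> show "f \<in> {f. (\<forall>i\<ge>n. f i = 0) \<and> nf n f = 1}" by simp
    qed
  next
    show "{f. (\<forall>i\<ge>n. f i = 0) \<and> nf n f = 1} \<subseteq> S"
    proof
    fix f assume f: "f \<in> {f. (\<forall>i\<ge>n. f i = 0) \<and> nf n f = 1}"
    have "\<bar>f i\<bar> \<le> 1" if "i < n" for i
    proof -
      have "(f i)\<^sup>2 \<le> nf n f" unfolding nf_def
        by (rule member_le_sum) (use that in auto)
      with f have "(f i)\<^sup>2 \<le> 1" by simp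
      thus ?thesis by (simp add: abs_square_le_1)
    qed
    with f show "f \<in> S" unfolding S_def B_def by (auto simp: PiE_iff abs_le_iff)
  qed
  qed
  have ne: "(\<lambda>i. if i = 0 then 1 else 0) \<in> S"
  proof -
    have "(\<Sum>i = 0..<n. ((if i = 0 then 1 else 0)::real)\<^sup>2) = (\<Sum>i = 0..<n. ((if i = 0 then 1 else 0)::real))"
      by (rule sum.cong) auto
    also have "\<dots> = 1" using assms by simp
    finally show ?thesis unfolding Seq nf_def using assms by simp
  qed
  have "continuous_on S (qf a n)" unfolding qf_def by (intro continuous_intros)
  from continuous_attains_sup[OF cS _ this] ne obtain y where "y \<in> S" "\<forall>z\<in>S. qf a n z \<le> qf a n y"
    by blast
  thus ?thesis unfolding Seq by blast
qed

lemma qf_scale: "qf a n (\<lambda>i. c * f i) = c\<^sup>2 * qf a n f"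
  unfolding qf_def power2_eq_square by (simp add: sum_distrib_left algebra_simps)

lemma nf_scale: "nf n (\<lambda>i. c * f i) = c\<^sup>2 * nf n f"
  unfolding nf_def by (simp add: sum_distrib_left power_mult_distrib)

lemma qf_cong: "(\<And>i. i < n \<Longrightarrow> f i = g i) \<Longrightarrow> qf a n f = qf a n g"
  unfolding qf_def by (intro sum.cong) auto

lemma nf_cong: "(\<And>i. i < n \<Longrightarrow> f i = g i) \<Longrightarrow> nf n f = nf n g"
  unfolding nf_def by (intro sum.cong) auto

lemma nf_zero: assumes "nf n f = 0" "i < n" shows "f i = 0"
proof -
  have "\<forall>i\<in>{0..<n}. (f i)\<^sup>2 = 0" using assms(1) unfolding nf_def
    by (subst sum_nonneg_eq_0_iff[symmetric]) auto
  thus ?thesis using assms(2) by simp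
qed

lemma nf_nonneg: "nf n f \<ge> 0" unfolding nf_def by (intro sum_nonneg) auto

lemma qf_le_max:
  assumes ymax: "\<forall>f. (\<forall>i\<ge>n. f i = 0) \<and> nf n f = 1 \<longrightarrow> qf a n f \<le> qf a n y"
  shows "qf a n f \<le> qf a n y * nf n f"
proof (cases "nf n f = 0")
  case True
  hence "qf a n f = qf a n (\<lambda>i. 0 * f i)" using nf_zero by (intro qf_cong) auto
  also have "\<dots> = 0" by (simp add: qf_def)
  finally show ?thesis using True by simp
next
  case False
  define s where "s = sqrt (nf n f)"
  have s: "s > 0" "s\<^sup>2 = nf n f" using False nf_nonneg[of n f] unfolding s_def by auto
  define g where "g i = (if i < n then (1/s) * f i else 0)" for i
  have "nf n g = (1/s)\<^sup>2 * nf n f" unfolding nf_scale[symmetric] g_def by (intro nf_cong) auto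
  hence "nf n g = 1" using s False by (simp add: power_divide)
  moreover have "\<forall>i\<ge>n. g i = 0" unfolding g_def by auto
  ultimately have "qf a n g \<le> qf a n y" using ymax by blast
  moreover have "qf a n g = (1/s)\<^sup>2 * qf a n f" unfolding qf_scale[symmetric] g_def by (intro qf_cong) auto
  ultimately have "qf a n f / s\<^sup>2 \<le> qf a n y" by (simp add: power_divide)
  moreover have pos: "nf n f > 0" using s(1) s(2)[symmetric] by simp
  ultimately show ?thesis using s(2) by (simp add: divide_le_eq)
qed

lemma qf_expand:
  assumes sym: "\<And>i j. a i j = a j i"
  shows "qf a n (\<lambda>i. y i + t * u i) = qf a n y + 2*t*(\<Sum>i\<in>{0..<n}. u i * (\<Sum>j\<in>{0..<n}. a i j * y j)) + t\<^sup>2 * qf a n u"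
proof -
  have "qf a n (\<lambda>i. y i + t * u i) = (\<Sum>i\<in>{0..<n}. \<Sum>j\<in>{0..<n}. a i j * y i * y j + t * (a i j * u i * y j) + t * (a i j * y i * u j) + t\<^sup>2 * (a i j * u i * u j))"
    unfolding qf_def by (intro sum.cong refl) (simp add: algebra_simps power2_eq_square)
  also have "\<dots> = qf a n y + t * (\<Sum>i\<in>{0..<n}. \<Sum>j\<in>{0..<n}. a i j * u i * y j) + t * (\<Sum>i\<in>{0..<n}. \<Sum>j\<in>{0..<n}. a i j * y i * u j) + t\<^sup>2 * qf a n u"
    unfolding qf_def by (simp add: sum.distrib sum_distrib_left)
  also have "(\<Sum>i\<in>{0..<n}. \<Sum>j\<in>{0..<n}. a i j * y i * u j) = (\<Sum>i\<in>{0..<n}. \<Sum>j\<in>{0..<n}. a i j * u i * y j)"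
    by (subst sum.swap) (simp add: sym mult.commute mult.left_commute)
  also have "(\<Sum>i\<in>{0..<n}. \<Sum>j\<in>{0..<n}. a i j * u i * y j) = (\<Sum>i\<in>{0..<n}. u i * (\<Sum>j\<in>{0..<n}. a i j * y j))"
    by (simp add: sum_distrib_left mult.commute mult.left_commute)
  finally show ?thesis by simp
qed

lemma nf_expand:
  shows "nf n (\<lambda>i. y i + t * u i) = nf n y + 2*t*(\<Sum>i\<in>{0..<n}. u i * y i) + t\<^sup>2 * nf n u"
  unfolding nf_def by (simp add: sum.distrib sum_distrib_left power2_eq_square algebra_simps)

lemma quad_nonpos: assumes "\<And>t::real. 2*t*c + t\<^sup>2 * d \<le> 0" "c \<ge> 0" shows "c = 0"
proof (rule ccontr)
  assume "c \<noteq> 0" hence c: "c > 0" using assms(2) by simp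
  define t where "t = c / (\<bar>d\<bar> + 1)"
  have t: "t > 0" using c unfolding t_def by simp
  have "t * \<bar>d\<bar> \<le> c" unfolding t_def using c by (simp add: field_simps)
  hence "t\<^sup>2 * \<bar>d\<bar> \<le> t * c" using t by (simp add: power2_eq_square mult.assoc mult_left_mono)
  moreover have "t\<^sup>2 * (- \<bar>d\<bar>) \<le> t\<^sup>2 * d" by (intro mult_left_mono) auto
  hence "- (t\<^sup>2 * \<bar>d\<bar>) \<le> t\<^sup>2 * d" by simp
  moreover have "t * c > 0" using t c by simp
  ultimately have "2*t*c + t\<^sup>2 * d > 0" by linarith
  with assms(1)[of t] show False by simp
qed

lemma rayleigh_fun:
  assumes sym: "\<And>i j. a i j = a j i" and n: "n > 0"
  shows "\<exists>\<mu> y. nf n y = 1 \<and> (\<forall>i<n. (\<Sum>j\<in>{0..<n}. a i j * y j) = \<mu> * y i) \<and> (\<forall>f. qf a n f \<le> \<mu> * nf n f)"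
proof -
  obtain y where y0: "\<forall>i\<ge>n. y i = 0" and y1: "nf n y = 1" and
    ymax: "\<forall>f. (\<forall>i\<ge>n. f i = 0) \<and> nf n f = 1 \<longrightarrow> qf a n f \<le> qf a n y"
    using max_exists[OF n, of a] by blast
  define \<mu> where "\<mu> = qf a n y"
  have le: "qf a n f \<le> \<mu> * nf n f" for f unfolding \<mu>_def by (rule qf_le_max[OF ymax])
  define u where "u i = (\<Sum>j\<in>{0..<n}. a i j * y j) - \<mu> * y i" for i
  have "2*t*nf n u + t\<^sup>2 * (qf a n u - \<mu> * nf n u) \<le> 0" for t
  proof -
    have "qf a n (\<lambda>i. y i + t * u i) \<le> \<mu> * nf n (\<lambda>i. y i + t * u i)" by (rule le)
    hence "qf a n y + 2*t*(\<Sum>i\<in>{0..<n}. u i * (\<Sum>j\<in>{0..<n}. a i j * y j)) + t\<^sup>2 * qf a n u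
      \<le> \<mu> * (1 + 2*t*(\<Sum>i\<in>{0..<n}. u i * y i) + t\<^sup>2 * nf n u)"
      unfolding qf_expand[OF sym] nf_expand y1 .
    moreover have "(\<Sum>i\<in>{0..<n}. u i * (\<Sum>j\<in>{0..<n}. a i j * y j)) - \<mu> * (\<Sum>i\<in>{0..<n}. u i * y i) = nf n u"
    proof -
      define Ay where "Ay i = (\<Sum>j\<in>{0..<n}. a i j * y j)" for i
      have "(\<Sum>i\<in>{0..<n}. u i * Ay i) - \<mu> * (\<Sum>i\<in>{0..<n}. u i * y i) = (\<Sum>i\<in>{0..<n}. u i * (Ay i - \<mu> * y i))"
        by (simp add: sum_subtractf sum_distrib_left right_diff_distrib mult.left_commute)
      also have "\<dots> = nf n u" unfolding nf_def by (intro sum.cong) (auto simp: u_def Ay_def power2_eq_square)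
      finally show ?thesis unfolding Ay_def .
    qed
    ultimately show ?thesis unfolding \<mu>_def by (simp add: algebra_simps)
  qed
  hence "nf n u = 0" by (intro quad_nonpos[of "nf n u" "qf a n u - \<mu> * nf n u"] nf_nonneg)
  hence "\<forall>i<n. (\<Sum>j\<in>{0..<n}. a i j * y j) = \<mu> * y i" using nf_zero[of n u] unfolding u_def by auto
  with y1 le show ?thesis by blast
qed




lemma ff_snoc: "first_fit E (xs @ [x]) = ff_step E (first_fit E xs) x"
  unfolding first_fit_def by simp

lemma ff_inv:
  assumes g: "simple_graph n E" and "distinct xs" "set xs \<subseteq> {0..<n}"
  shows "(\<forall>v. first_fit E xs v \<noteq> 0 \<longleftrightarrow> v \<in> set xs)
    \<and> (\<forall>v w. E v w \<longrightarrow> first_fit E xs v \<noteq> 0 \<longrightarrow> first_fit E xs w \<noteq> 0 \<longrightarrow> first_fit E xs v \<noteq> first_fit E xs w)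
    \<and> (\<forall>v c. first_fit E xs v \<noteq> 0 \<longrightarrow> 0 < c \<longrightarrow> c < first_fit E xs v \<longrightarrow> (\<exists>w. E v w \<and> first_fit E xs w = c))"
  using assms(2,3)
proof (induction xs rule: rev_induct)
  case Nil
  then show ?case by (simp add: first_fit_def)
next
  case (snoc x xs)
  define cf where "cf = first_fit E xs"
  from snoc have IH1: "\<And>v. cf v \<noteq> 0 \<longleftrightarrow> v \<in> set xs"
    and IH2: "\<And>v w. E v w \<Longrightarrow> cf v \<noteq> 0 \<Longrightarrow> cf w \<noteq> 0 \<Longrightarrow> cf v \<noteq> cf w"
    and IH3: "\<And>v c. cf v \<noteq> 0 \<Longrightarrow> 0 < c \<Longrightarrow> c < cf v \<Longrightarrow> (\<exists>w. E v w \<and> cf w = c)"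
    unfolding cf_def by auto
  have xnew: "cf x = 0" using IH1 snoc.prems by auto
  define P where "P c = (0 < c \<and> (\<forall>y. E x y \<and> cf y \<noteq> 0 \<longrightarrow> cf y \<noteq> c))" for c
  define L where "L = (LEAST c. P c)"
  have "P (Suc (Max (cf ` {0..<n})))"
  proof -
    have "cf y \<le> Max (cf ` {0..<n})" if "E x y" for y
      using g that unfolding simple_graph_def by (intro Max_ge) auto
    thus ?thesis unfolding P_def by (metis not_less_eq_eq order_refl zero_less_Suc)
  qed
  hence PL: "P L" unfolding L_def by (rule LeastI)
  have notP: "\<not> P c" if "c < L" for c using that unfolding L_def by (rule not_less_Least)
  have new: "first_fit E (xs @ [x]) = cf(x := L)"
    unfolding ff_snoc ff_step_def cf_def L_def P_def by simp
  have Lpos: "L > 0" using PL unfolding P_def by simp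
  have noloop: "\<not> E x x" using g unfolding simple_graph_def by auto
  have symE: "E v w \<Longrightarrow> E w v" for v w using g unfolding simple_graph_def by auto
  show ?case unfolding new
  proof (intro conjI allI impI)
    fix v show "(cf(x := L)) v \<noteq> 0 \<longleftrightarrow> v \<in> set (xs @ [x])" using IH1 Lpos by auto
  next
    fix v w assume "E v w" "(cf(x := L)) v \<noteq> 0" "(cf(x := L)) w \<noteq> 0"
    then show "(cf(x := L)) v \<noteq> (cf(x := L)) w"
      using IH2[of v w] PL noloop symE unfolding P_def by (auto split: if_splits)
  next
    fix v c assume a: "(cf(x := L)) v \<noteq> 0" "0 < c" "c < (cf(x := L)) v"
    show "\<exists>w. E v w \<and> (cf(x := L)) w = c"
    proof (cases "v = x")
      case True
      with a have "c < L" by simp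
      from notP[OF this] a(2) obtain y where "E x y" "cf y \<noteq> 0" "cf y = c" unfolding P_def by auto
      moreover have "y \<noteq> x" using noloop \<open>E x y\<close> by auto
      ultimately show ?thesis using True by auto
    next
      case False
      with a have "cf v \<noteq> 0" "c < cf v" by auto
      from IH3[OF this(1) a(2) this(2)] obtain w where "E v w" "cf w = c" by auto
      moreover have "w \<noteq> x" using xnew \<open>cf w = c\<close> a(2) by auto
      ultimately show ?thesis by auto
    qed
  qed
qed

lemma core:
  assumes g: "simple_graph n E" and edge: "E i0 j0" and dxs: "distinct xs" and sxs: "set xs = {0..<n}"
    and ray: "\<forall>f. qf (\<lambda>i j. if E i j then 1 else 0) n f \<le> lam * nf n f"
  shows "lam > 0 \<and> (real (ff_num_colors E xs))^3 \<le> 108 * real n * lam\<^sup>2"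
proof -
  define cf where "cf = first_fit E xs"
  define a where "a = (\<lambda>i j. if E i j then 1 else (0::real))"
  have ray': "qf a n f \<le> lam * nf n f" for f using ray unfolding a_def by blast
  note inv = ff_inv[OF g dxs, unfolded sxs, OF order_refl, folded cf_def]
  have cpos: "cf v \<noteq> 0" if "v < n" for v using inv that by auto
  have proper: "E v w \<Longrightarrow> cf v \<noteq> cf w" for v w
    using inv g cpos unfolding simple_graph_def by metis
  have nb: "\<And>v c. v < n \<Longrightarrow> 0 < c \<Longrightarrow> c < cf v \<Longrightarrow> \<exists>w. E v w \<and> cf w = c"
    using inv cpos by blast
  have Ebound: "E v w \<Longrightarrow> v < n \<and> w < n" for v w using g unfolding simple_graph_def by auto
  have n0: "n > 0" using Ebound[OF edge] by auto
  define Cs where "Cs = cf ` {0..<n}"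
  define M where "M = Max Cs"
  have fC: "finite Cs" "Cs \<noteq> {}" unfolding Cs_def using n0 by auto
  have kdef: "ff_num_colors E xs = card Cs" unfolding ff_num_colors_def Cs_def cf_def sxs ..
  have CsM: "Cs \<subseteq> {1..M}"
  proof
    fix c assume c: "c \<in> Cs"
    then obtain v where "v < n" "c = cf v" unfolding Cs_def by auto
    hence "c \<ge> 1" using cpos[of v] by simp
    moreover have "c \<le> M" unfolding M_def using fC c by simp
    ultimately show "c \<in> {1..M}" by simp
  qed
  have kM: "card Cs \<le> M" using card_mono[OF _ CsM] by simp
  obtain w where w: "w < n" "cf w = M" using Max_in[OF fC] unfolding M_def Cs_def by auto
  have colors: "\<exists>v<n. cf v = c" if "1 \<le> c" "c \<le> M" for c
  proof (cases "c = M")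
    case True thus ?thesis using w by auto
  next
    case False
    with that have "c < cf w" using w by auto
    from nb[OF w(1) _ this] that obtain u where "E w u" "cf u = c" by auto
    thus ?thesis using Ebound by auto
  qed
  have "cf i0 \<in> Cs" "cf j0 \<in> Cs" unfolding Cs_def using Ebound[OF edge] by auto
  hence "cf i0 \<le> M" "cf j0 \<le> M" unfolding M_def using fC by auto
  moreover have "cf i0 \<noteq> cf j0" "cf i0 \<noteq> 0" "cf j0 \<noteq> 0" using proper[OF edge] cpos Ebound[OF edge] by auto
  ultimately have M2: "M \<ge> 2" by linarith
  define m where "m = M div 2"
  have m1: "m \<ge> 1" using M2 unfolding m_def by simp
  define pick where "pick c = (SOME v. v < n \<and> cf v = c)" for c
  have pick: "pick c < n \<and> cf (pick c) = c" if "1 \<le> c" "c \<le> M" for c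
    unfolding pick_def using colors[OF that] by (rule someI_ex)
  define T where "T = pick ` {m+1..M}"
  have injp: "inj_on pick {m+1..M}"
    by (rule inj_onI) (metis pick atLeastAtMost_iff le_add2 le_trans m1)
  define tT where "tT = M - m"
  have cardT: "card T = tT" unfolding T_def tT_def using card_image[OF injp] by simp
  have tTm: "tT \<ge> m" unfolding tT_def m_def by simp
  have Tsub: "T \<subseteq> {0..<n}" unfolding T_def using pick m1 by fastforce
  have Tcol: "cf t > m" if "t \<in> T" for t using that pick m1 unfolding T_def by fastforce
  define L where "L = {v\<in>{0..<n}. cf v \<le> m}"
  have TL: "v \<notin> L" if "v \<in> T" for v using Tcol[OF that] unfolding L_def by auto
  have degT: "m \<le> card {j\<in>L. E t j}" if t: "t \<in> T" for t
  proof -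
    define nbf where "nbf c = (SOME u. E t u \<and> cf u = c)" for c
    have nbf: "E t (nbf c) \<and> cf (nbf c) = c" if "1 \<le> c" "c \<le> m" for c
    proof -
      have "t < n" using Tsub t by auto
      moreover have "c < cf t" using Tcol[OF t] that by simp
      ultimately have "\<exists>u. E t u \<and> cf u = c" using nb[of t c] that by simp
      thus ?thesis unfolding nbf_def by (rule someI_ex)
    qed
    have "inj_on nbf {1..m}" by (rule inj_onI) (metis nbf atLeastAtMost_iff)
    moreover have "nbf ` {1..m} \<subseteq> {j\<in>L. E t j}" using nbf Ebound unfolding L_def by fastforce
    moreover have "finite {j\<in>L. E t j}" unfolding L_def by auto
    ultimately show ?thesis using card_inj_on_le by fastforce
  qed
  have tT0: "tT > 0" using tTm m1 by simp
  define al where "al = sqrt (real n / real tT)"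
  have al: "al > 0" "al\<^sup>2 = real n / real tT" unfolding al_def using n0 tT0 by auto
  define gv where "gv v = (if v \<in> T then al else if v \<in> L then 1 else 0)" for v
  have gnn: "gv v \<ge> 0" for v unfolding gv_def using al by auto
  have ann: "a i j \<ge> 0" for i j unfolding a_def by auto
  have q1: "real tT * al * real m \<le> qf a n gv"
  proof -
    have "qf a n gv \<ge> (\<Sum>i\<in>T. \<Sum>j\<in>{0..<n}. a i j * gv i * gv j)"
      unfolding qf_def using Tsub gnn ann by (intro sum_mono2) (auto intro!: sum_nonneg)
    moreover have "(\<Sum>j\<in>{0..<n}. a i j * gv i * gv j) \<ge> al * real m" if i: "i \<in> T" for i
    proof -
      have "(\<Sum>j\<in>{0..<n}. a i j * gv i * gv j) \<ge> (\<Sum>j\<in>{j\<in>L. E i j}. a i j * gv i * gv j)"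
        using gnn ann by (intro sum_mono2) (auto simp: L_def)
      moreover have "(\<Sum>j\<in>{j\<in>L. E i j}. a i j * gv i * gv j) = (\<Sum>j\<in>{j\<in>L. E i j}. al)"
        using i TL by (intro sum.cong) (auto simp: a_def gv_def)
      moreover have "(\<Sum>j\<in>{j\<in>L. E i j}. al) \<ge> al * real m" using degT[OF i] al
        by (simp add: mult.commute)
      ultimately show ?thesis by linarith
    qed
    hence "(\<Sum>i\<in>T. \<Sum>j\<in>{0..<n}. a i j * gv i * gv j) \<ge> (\<Sum>i\<in>T. al * real m)"
      by (intro sum_mono) auto
    moreover have "(\<Sum>i\<in>T. al * real m) = real tT * al * real m" using cardT by simp
    ultimately show ?thesis by linarith
  qed
  have n1: "nf n gv \<le> 2 * real n"
  proof -
    have fin: "finite {0..<n}" by simp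
    have "nf n gv = (\<Sum>i\<in>{0..<n} - T. (gv i)\<^sup>2) + (\<Sum>i\<in>T. (gv i)\<^sup>2)"
      unfolding nf_def by (rule sum.subset_diff[OF Tsub fin])
    moreover have "(\<Sum>i\<in>T. (gv i)\<^sup>2) = real tT * al\<^sup>2" using cardT by (simp add: gv_def)
    moreover have "real tT * al\<^sup>2 = real n" using al tT0 by simp
    moreover have "(\<Sum>i\<in>{0..<n} - T. (gv i)\<^sup>2) \<le> (\<Sum>i\<in>{0..<n} - T. 1)"
      by (intro sum_mono) (auto simp: gv_def)
    moreover have "(\<Sum>i\<in>{0..<n} - T. (1::real)) \<le> real n"
      using card_mono[of "{0..<n}" "{0..<n} - T"] by simp
    ultimately show ?thesis by linarith
  qed
  have pos: "real tT * al * real m > 0" using tT0 al m1 by simp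
  have r: "real tT * al * real m \<le> lam * nf n gv" using q1 ray'[of gv] by linarith
  have nfnn: "nf n gv \<ge> 0" unfolding nf_def by (intro sum_nonneg) auto
  have lampos: "lam > 0"
  proof (rule ccontr)
    assume "\<not> lam > 0"
    hence "lam * nf n gv \<le> 0" using nfnn by (simp add: mult_nonpos_nonneg)
    thus False using r pos by linarith
  qed
  have "lam * nf n gv \<le> lam * (2 * real n)" using n1 lampos by simp
  moreover have "lam * (2 * real n) = 2 * real n * lam" by simp
  ultimately have b: "real tT * al * real m \<le> 2 * real n * lam" using r by linarith
  have "(real tT * al * real m)\<^sup>2 \<le> (2 * real n * lam)\<^sup>2"
    using b pos by (intro power_mono) auto
  moreover have "(real tT * al * real m)\<^sup>2 = real tT * real n * (real m)\<^sup>2"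
  proof -
    have "(real tT * al * real m)\<^sup>2 = (real tT)\<^sup>2 * al\<^sup>2 * (real m)\<^sup>2" by (simp add: power_mult_distrib)
    also have "\<dots> = (real tT)\<^sup>2 * (real n / real tT) * (real m)\<^sup>2" using al(2) by simp
    also have "\<dots> = real tT * real n * (real m)\<^sup>2" using tT0 by (simp add: power2_eq_square)
    finally show ?thesis .
  qed
  moreover have "(2 * real n * lam)\<^sup>2 = 4 * (real n)\<^sup>2 * lam\<^sup>2" by (simp add: power_mult_distrib)
  ultimately have "real tT * real n * (real m)\<^sup>2 \<le> 4 * (real n)\<^sup>2 * lam\<^sup>2" by simp
  hence "real tT * (real m)\<^sup>2 \<le> 4 * real n * lam\<^sup>2"
    using n0 by (simp add: power2_eq_square field_simps)
  moreover have "(real m)^3 \<le> real tT * (real m)\<^sup>2"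
  proof -
    have "real m * (real m)\<^sup>2 \<le> real tT * (real m)\<^sup>2" using tTm by (intro mult_right_mono) auto
    thus ?thesis by (simp add: power2_eq_square power3_eq_cube)
  qed
  ultimately have m3: "(real m)^3 \<le> 4 * real n * lam\<^sup>2" by linarith
  have "M \<le> 3 * m" using M2 unfolding m_def by presburger
  hence "card Cs \<le> 3 * m" using kM by linarith
  hence "(real (card Cs))^3 \<le> (3 * real m)^3" by (intro power_mono) auto
  also have "\<dots> = 27 * (real m)^3" by (simp add: power_mult_distrib)
  finally show ?thesis using m3 lampos unfolding kdef by linarith
qed


lemma lambda1_ray:
  assumes g: "simple_graph n E" and n: "n > 0"
  shows "\<forall>f. qf (\<lambda>i j. if E i j then 1 else 0) n f \<le> lambda1 n E * nf n f"
proof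
  fix f
  define a where "a = (\<lambda>i j. if E i j then 1 else (0::real))"
  have sym: "a i j = a j i" for i j using g unfolding a_def simple_graph_def by auto
  obtain mu y where y1: "nf n y = 1" and ev: "\<forall>i<n. (\<Sum>j\<in>{0..<n}. a i j * y j) = mu * y i"
    and le: "\<forall>f. qf a n f \<le> mu * nf n f"
    using rayleigh_fun[of a n, OF sym n] by blast
  define A where "A = adjacency_matrix n E"
  have A: "A \<in> carrier_mat n n" unfolding A_def adjacency_matrix_def by simp
  have nz: "Matrix.vec n y \<noteq> 0\<^sub>v n"
  proof
    assume "Matrix.vec n y = 0\<^sub>v n"
    hence "y i = 0" if "i < n" for i using that by (metis index_vec index_zero_vec(1))
    hence "nf n y = 0" unfolding nf_def by simp
    with y1 show False by simp
  qed
  have evv: "A *\<^sub>v Matrix.vec n y = mu \<cdot>\<^sub>v Matrix.vec n y"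
  proof (rule eq_vecI)
    fix i assume "i < dim_vec (mu \<cdot>\<^sub>v Matrix.vec n y)"
    hence i: "i < n" by simp
    have "(A *\<^sub>v Matrix.vec n y) $ i = (\<Sum>j\<in>{0..<n}. a i j * y j)"
      using i unfolding A_def adjacency_matrix_def a_def
      by (simp add: mult_mat_vec_def scalar_prod_def row_def)
    also have "\<dots> = mu * y i" using ev i by simp
    finally show "(A *\<^sub>v Matrix.vec n y) $ i = (mu \<cdot>\<^sub>v Matrix.vec n y) $ i" using i by simp
  qed (use A in simp)
  have dr: "dim_row A = n" using A by simp
  have "eigenvector A (Matrix.vec n y) mu" unfolding eigenvector_def dr
    using nz evv Matrix.vec_carrier[of n y] by blast
  hence "eigenvalue A mu" unfolding eigenvalue_def by blast
  moreover have "finite {k. eigenvalue A k}"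
  proof -
    have "{k. eigenvalue A k} = {k. poly (char_poly A) k = 0}"
      using eigenvalue_root_char_poly[OF A] by auto
    moreover have "char_poly A \<noteq> 0" using degree_monic_char_poly[OF A] by auto
    ultimately show ?thesis using poly_roots_finite by simp
  qed
  ultimately have "mu \<le> lambda1 n E" unfolding lambda1_def A_def by (intro Max_ge) auto
  hence "mu * nf n f \<le> lambda1 n E * nf n f" by (intro mult_right_mono nf_nonneg)
  with le show "qf (\<lambda>i j. if E i j then 1 else 0) n f \<le> lambda1 n E * nf n f"
    unfolding a_def by (meson order_trans)
qed

lemma grundy_attained:
  "\<exists>xs. distinct xs \<and> set xs = {0..<n} \<and> grundy_number n E = ff_num_colors E xs"
proof -
  define X where "X = {xs. distinct xs \<and> set xs = {0..<n}}"
  have "X \<subseteq> {xs. set xs \<subseteq> {0..<n} \<and> length xs \<le> n}"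
    unfolding X_def using distinct_card by fastforce
  hence fX: "finite X" using finite_lists_length_le[of "{0..<n}" n] finite_subset by blast
  have "[0..<n] \<in> X" unfolding X_def by simp
  hence ne: "ff_num_colors E ` X \<noteq> {}" by blast
  have eq: "{ff_num_colors E xs | xs. distinct xs \<and> set xs = {0..<n}} = ff_num_colors E ` X"
    unfolding X_def by auto
  have "grundy_number n E \<in> ff_num_colors E ` X"
    unfolding grundy_number_def eq using fX ne by (intro Max_in) auto
  thus ?thesis unfolding X_def by auto
qed

theorem corollary1:
  shows "\<exists>C::real. C > 0 \<and> (\<forall>(n::nat) (E::nat \<Rightarrow> nat \<Rightarrow> bool).
     simple_graph n E \<and> (\<exists>i j. E i j) \<longrightarrow>
     real (grundy_number n E) \<le> C * lambda1 n E * (real n / lambda1 n E) powr (1/3))"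
proof (intro exI[of _ 5] conjI allI impI)
  fix n E assume h: "simple_graph n E \<and> (\<exists>i j. E i j)"
  then obtain i0 j0 where g: "simple_graph n E" and e: "E i0 j0" by blast
  have "i0 < n" using g e unfolding simple_graph_def by blast
  hence n: "n > 0" by simp
  obtain xs where xs: "distinct xs" "set xs = {0..<n}" "grundy_number n E = ff_num_colors E xs"
    using grundy_attained by blast
  define lam where "lam = lambda1 n E"
  from core[OF g e xs(1,2) lambda1_ray[OF g n]] have lam: "lam > 0"
    and k3: "(real (grundy_number n E))^3 \<le> 108 * real n * lam\<^sup>2"
    unfolding lam_def xs(3) by auto
  define r where "r = (real n / lam) powr (1/3)"
  have r0: "r > 0" unfolding r_def using n lam by simp
  have "r^3 = (real n / lam) powr (real 3 * (1/3))" unfolding r_def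
    by (rule powr_power) (use n lam in simp)
  hence r3: "r^3 = real n / lam" using n lam by simp
  have "(5 * lam * r)^3 = 125 * lam^3 * r^3" by (simp add: power_mult_distrib)
  also have "\<dots> = 125 * real n * lam\<^sup>2" using r3 lam by (simp add: power2_eq_square power3_eq_cube)
  finally have big: "(real (grundy_number n E))^3 \<le> (5 * lam * r)^3" using k3 lam n
    by (smt (verit) mult_right_mono of_nat_0_le_iff zero_le_power2)
  have "real (grundy_number n E) \<le> 5 * lam * r"
  proof (rule ccontr)
    assume "\<not> real (grundy_number n E) \<le> 5 * lam * r"
    hence "5 * lam * r < real (grundy_number n E)" by simp
    hence "(5 * lam * r)^3 < (real (grundy_number n E))^3"
      using r0 lam by (intro power_strict_mono) auto
    with big show False by simp
  qed
  thus "real (grundy_number n E) \<le> 5 * lambda1 n E * (real n / lambda1 n E) powr (1/3)"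
    unfolding lam_def r_def .
qed (simp)

end
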